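(* Let $f_1 \in \mathcal{F}_{\mu_1,L_1}(\mathbb{R}^d)$ and $f_2 \in \mathcal{F}_{\mu_2,L_2}(\mathbb{R}^d)$ with $\mu_1 \in [0,\infty)$, $L_1 \in (\mu_1,\infty]$, $\mu_2 \in \mathbb{R}$, $L_2 \in (\mu_2,\infty]$, such that $F = f_1 - f_2$ is bounded below, $\emptyset \ne \operatorname{dom}\partial f_1 \subseteq \operatorname{dom}\partial f_2$ and $\operatorname{range}\partial f_2 \subseteq \operatorname{range}\partial f_1$. Assume at least one of $f_1, f_2$ is smooth (i.e. $L_1<\infty$ or $L_2<\infty$), and assume $\mu_1 + \mu_2 > 0$ or $\mu_1 = \mu_2 = 0$. Let $x \in \operatorname{dom}\partial f_1$, let $g_2 \in \partial f_2(x)$ be the subgradient selected in one DCA iteration and $x^+ \in \operatorname{argmin}_w\{f_1(w) - \langle g_2, w\rangle\}$ the resulting point, so that $g_1^+ := g_2 \in \partial f_1(x^+)$. Let $g_1 \in \partial f_1(x)$ and $g_2^+ \in \partial f_2(x^+)$ be arbitrary. Set $B := \mu_1^{-1} + \mu_2^{-1} + L_2^{-1}$ and $E := \frac{L_2+\mu_2}{L_1 L_2}\cdot\frac{L_2 - L_1}{-\mu_2} + \mu_1^{-1} - L_1^{-1}$. Then for each $i \in \{1,\dots,6\}$ such that the parameters lie in the domain $D_i$ below, $$F(x) - F(x^+) \ge \sigma_i \tfrac12 \|g_1 - g_2\|^2 + \sigma_i^+ \tfrac12 \|g_1^+ - g_2^+\|^2,$$ with $\sigma_i, \sigma_i^+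 \ge 0$ given by: (1) $\sigma_1 = L_2^{-1}\frac{L_2-\mu_1}{L_1-\mu_1}$, $\sigma_1^+ = L_2^{-1}\Big(1 + \frac{L_2^{-1} - L_1^{-1}}{\mu_1^{-1} - L_1^{-1}}\Big)$; $D_1$: $L_1 \ge L_2 \ge \mu_1 \ge 0$, $L_1 > \mu_2$, and either $\mu_2 \ge 0$, or $\mu_2 < 0$ and $E \le 0$. (2) $\sigma_2 = L_1^{-1}\Big(1 + \frac{L_1^{-1} - L_2^{-1}}{\mu_2^{-1} - L_2^{-1}}\Big)$, $\sigma_2^+ = L_1^{-1}\frac{L_1-\mu_2}{L_2-\mu_2}$; $D_2$: $L_2 \ge L_1 \ge \mu_2 \ge 0$, $L_2 > \mu_1$, $\mu_1 \ge 0$. (3) $\sigma_3 = \frac{L_1^{-1} B}{B - L_1^{-1}}$, $\sigma_3^+ = \frac{1}{L_2+\mu_2}$; $D_3$: $\mu_2<0$, $\mu_1>0$, $L_2>\mu_1$, $L_1>\mu_2$, $B \le 0$, and either ($L_1 \ge L_2$ and $E \ge 0$) or $L_2 > L_1$. (4) $\sigma_4 = 0$, $\sigma_4^+ = \frac{\mu_1+\mu_2}{\mu_2^2}$; $D_4$: $\mu_2<0$, $\mu_1>0$, $L_1>\mu_2$, and either ($B>0$ and $L_2 > \mu_1$), or ($B>0$ and $0<L_2 \le \mu_1$), or ($B \le 0$ and $L_2 \le 0$). (5) $\sigma_5 = 0$, $\sigma_5^+ = \frac{L_2+\mu_1}{L_2^2}$; $D_5$: $L_1 > \mu_1 \ge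 L_2 > 0$, $L_1 > \mu_2$, and either $\mu_2 \ge 0$, or $\mu_2<0$ and $B \le 0$. (6) $\sigma_6 = \frac{L_1+\mu_2}{L_1^2}$, $\sigma_6^+ = 0$; $D_6$: $L_2 > \mu_2 \ge L_1 > \mu_1 \ge 0$.
   Context: For $\mu \in \mathbb{R}$ and $L \in (\mu,\infty]$, $\mathcal{F}_{\mu,L}(\mathbb{R}^d)$ is the class of proper lower semicontinuous $f:\mathbb{R}^d\to\mathbb{R}$ with $f - \frac{\mu}{2}\|\cdot\|^2$ convex and, if $L<\infty$, $\frac{L}{2}\|\cdot\|^2 - f$ convex (no upper condition when $L = \infty$); $L$ may be nonpositive. For such $f$, $\partial f(x) = \{g + \mu x : g \in \partial(f - \frac{\mu}{2}\|\cdot\|^2)(x)\}$ with the convex subdifferential; $\partial f(x) = \{\nabla f(x)\}$ where $f$ is differentiable. $\operatorname{dom}\partial f = \{x : \partial f(x)\neq\emptyset\}$, $\operatorname{range}\partial f = \bigcup_x \partial f(x)$. A function is smooth if it is differentiable with Lipschitz gradient (here: its upper curvature $L$ is finite). Conventions: $1/\infty = 0$, and expressions involving an infinite parameter are understood as their limits. *)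

theory Defs
  imports "HOL-Analysis.Analysis"
begin

definition lsc_fun :: "('a::topological_space \<Rightarrow> real) \<Rightarrow> bool" where
  "lsc_fun f \<longleftrightarrow> (\<forall>c. closed {x. f x \<le> c})"

definition FmuL :: "real \<Rightarrow> ereal \<Rightarrow> ('a::euclidean_space \<Rightarrow> real) \<Rightarrow> bool" where
  "FmuL \<mu> L f \<longleftrightarrow> ereal \<mu> < L \<and> lsc_fun f \<and>
     convex_on UNIV (\<lambda>x. f x - \<mu> / 2 * norm x ^ 2) \<and>
     (L \<noteq> \<infinity> \<longrightarrow> convex_on UNIV (\<lambda>x. real_of_ereal L / 2 * norm x ^ 2 - f x))"

definition cvx_subdiff :: "('a::real_inner \<Rightarrow> real) \<Rightarrow> 'a \<Rightarrow> 'a set" where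
  "cvx_subdiff h x = {g. \<forall>y. h y \<ge> h x + inner g (y - x)}"

definition subdiff :: "real \<Rightarrow> ('a::real_inner \<Rightarrow> real) \<Rightarrow> 'a \<Rightarrow> 'a set" where
  "subdiff \<mu> f x = {g + \<mu> *\<^sub>R x | g. g \<in> cvx_subdiff (\<lambda>y. f y - \<mu> / 2 * norm y ^ 2) x}"

definition dom_subdiff :: "real \<Rightarrow> ('a::real_inner \<Rightarrow> real) \<Rightarrow> 'a set" where
  "dom_subdiff \<mu> f = {x. subdiff \<mu> f x \<noteq> {}}"

definition range_subdiff :: "real \<Rightarrow> ('a::real_inner \<Rightarrow> real) \<Rightarrow> 'a set" where
  "range_subdiff \<mu> f = (\<Union>x. subdiff \<mu> f x)"

definition inv_ext :: "ereal \<Rightarrow> real" where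
  "inv_ext L = (if L = \<infinity> then 0 else 1 / real_of_ereal L)"

definition Bpar :: "real \<Rightarrow> real \<Rightarrow> ereal \<Rightarrow> real" where
  "Bpar \<mu>1 \<mu>2 L2 = 1 / \<mu>1 + 1 / \<mu>2 + inv_ext L2"

text \<open>E = (L2+mu2)/(L1 L2) * (L2-L1)/(-mu2) + 1/mu1 - 1/L1,
  rewritten using (L2-L1)/(L1 L2) = 1/L1 - 1/L2 (so that L1 = \<infinity> is the limit);
  only used where L2 is finite.\<close>
definition Epar :: "real \<Rightarrow> real \<Rightarrow> ereal \<Rightarrow> ereal \<Rightarrow> real" where
  "Epar \<mu>1 \<mu>2 L1 L2 = (real_of_ereal L2 + \<mu>2) / (- \<mu>2) * (inv_ext L1 - inv_ext L2)
      + 1 / \<mu>1 - inv_ext L1"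

end

theory Submission
  imports Defs
begin

lemma eps_lemma:
  fixes X Y K :: real
  assumes "\<And>s. s > 0 \<Longrightarrow> s \<le> 1 \<Longrightarrow> X \<le> Y + s * K"
  shows "X \<le> Y"
proof (cases "K \<le> 0")
  case True
  then show ?thesis using assms[of 1] by simp
next
  case False
  show ?thesis
  proof (rule field_le_epsilon)
    fix e :: real assume e: "e > 0"
    define s where "s = min 1 (e/K)"
    have s: "s > 0" "s \<le> 1" "s \<le> e/K" using e False by (auto simp: s_def)
    have "s * K \<le> (e/K) * K" using s False by (intro mult_right_mono) auto
    then have "s * K \<le> e" using False by simp
    then show "X \<le> Y + e" using assms[OF s(1,2)] by simp
  qed
qed

lemma descent_aux: fixes s L xx yy ww hx hy hz gg :: real
  shows "(1 + s) * (L/2 * xx - hx) \<le> L/2 * (xx - 2 * s * yy + s^2 * ww) - hy + s * (L/2 * (xx + 2 * yy + ww) - hz) \<Longrightarrow> hx - s * gg \<le> hy \<Longrightarrow> s * hz \<le> s * (hx + gg + L/2 * ww + s * (L/2 * ww))"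
  by (simp add: field_simps power2_eq_square)

lemma descent:
  fixes h :: "'a::real_inner \<Rightarrow> real"
  assumes cv: "convex_on UNIV (\<lambda>y. L/2 * norm y ^ 2 - h y)"
    and sg: "\<forall>y. h y \<ge> h x + inner g (y - x)"
  shows "h z \<le> h x + inner g (z - x) + L/2 * norm (z - x)^2"
proof -
  define w where "w = z - x"
  define \<psi> where "\<psi> = (\<lambda>y. L/2 * norm y ^ 2 - h y)"
  have main: "h z \<le> h x + inner g w + L/2 * inner w w + s * (L/2 * inner w w)" if s: "s > 0" for s
  proof -
    define y2 where "y2 = x - s *\<^sub>R w"
    define a where "a = s / (1 + s)"
    have a01: "0 \<le> a" "a \<le> 1" using s by (auto simp: a_def)
    have xeq: "(1 - a) *\<^sub>R y2 + a *\<^sub>R z = x"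
    proof -
      have "(1 - a) *\<^sub>R y2 + a *\<^sub>R z = x + (a - s * (1 - a)) *\<^sub>R w"
        by (simp add: y2_def w_def algebra_simps)
      moreover have "a - s * (1 - a) = 0" using s by (simp add: a_def field_simps)
      ultimately show ?thesis by simp
    qed
    have c: "\<psi> x \<le> (1 - a) * \<psi> y2 + a * \<psi> z"
      using convex_onD[OF cv a01, of y2 z] xeq by (simp add: \<psi>_def)
    have c2: "(1 + s) * \<psi> x \<le> \<psi> y2 + s * \<psi> z"
    proof -
      have "(1 + s) * \<psi> x \<le> (1 + s) * ((1 - a) * \<psi> y2 + a * \<psi> z)"
        using c s by (intro mult_left_mono) auto
      also have "\<dots> = (1 + s) * (1 - a) * \<psi> y2 + (1 + s) * a * \<psi> z" by (simp add: algebra_simps)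
      also have "(1 + s) * (1 - a) = 1" using s by (simp add: a_def field_simps)
      also have "(1 + s) * a = s" using s by (simp add: a_def field_simps)
      finally show ?thesis by simp
    qed
    have hy2: "h y2 \<ge> h x - s * inner g w"
      using sg[rule_format, of y2] by (simp add: y2_def inner_diff_right)
    have n1: "norm y2 ^ 2 = inner x x - 2 * s * inner x w + s^2 * inner w w"
      unfolding y2_def power2_norm_eq_inner
      by (simp add: inner_diff_left inner_diff_right inner_commute power2_eq_square algebra_simps)
    have n2: "norm z ^ 2 = inner x x + 2 * inner x w + inner w w"
    proof -
      have "z = x + w" by (simp add: w_def)
      then show ?thesis unfolding power2_norm_eq_inner by (simp add: inner_add_left inner_add_right
          inner_commute algebra_simps)
    qed
    have n0: "norm x ^ 2 = inner x x" by (simp add: power2_norm_eq_inner)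
    have "(1 + s) * (L/2 * inner x x - h x) \<le>
        (L/2 * (inner x x - 2 * s * inner x w + s^2 * inner w w) - h y2)
        + s * (L/2 * (inner x x + 2 * inner x w + inner w w) - h z)"
      using c2 n0 n1 n2 by (simp add: \<psi>_def)
    then have "s * h z \<le> s * (h x + inner g w + L/2 * inner w w + s * (L/2 * inner w w))"
      using hy2 by (rule descent_aux)
    then show ?thesis using s by simp
  qed
  have "h z \<le> h x + inner g w + L/2 * inner w w"
    by (rule eps_lemma[where K = "L/2 * inner w w"]) (use main in auto)
  then show ?thesis by (simp add: w_def power2_norm_eq_inner)
qed

lemma interp_h:
  fixes h :: "'a::real_inner \<Rightarrow> real"
  assumes cv: "convex_on UNIV (\<lambda>y. L/2 * norm y ^ 2 - h y)" and L: "L > 0"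
    and sx: "\<forall>z. h z \<ge> h x + inner gx (z - x)"
    and sy: "\<forall>z. h z \<ge> h y + inner gy (z - y)"
  shows "h y \<ge> h x + inner gx (y - x) + 1 / (2 * L) * norm (gx - gy) ^ 2"
proof -
  define v where "v = gy - gx"
  define z where "z = y - (1 / L) *\<^sub>R v"
  have a: "h z \<ge> h x + inner gx (z - x)" using sx by blast
  have b: "h z \<le> h y + inner gy (z - y) + L/2 * norm (z - y)^2"
    by (rule descent[OF cv sy])
  have e1: "inner gx (z - x) = inner gx (y - x) - (1 / L) * inner gx v"
    by (simp add: z_def inner_diff_right algebra_simps)
  have e2: "inner gy (z - y) = - (1 / L) * inner gy v"
    by (simp add: z_def inner_diff_right)
  have e3: "L/2 * norm (z - y)^2 = 1 / (2 * L) * inner v v"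
  proof -
    have "norm (z - y) = norm v / L" using L by (simp add: z_def)
    then have "norm (z - y)^2 = (1/L)^2 * inner v v"
      by (simp add: power2_norm_eq_inner[symmetric] power_divide)
    then show ?thesis using L by (simp add: power2_eq_square field_simps)
  qed
  have e4: "norm (gx - gy) ^ 2 = inner v v"
    by (simp add: v_def power2_norm_eq_inner[symmetric] norm_minus_commute)
  have e5: "inner gy v - inner gx v = inner v v"
    by (simp add: v_def inner_diff_left)
  have "h x + inner gx (y - x) - (1 / L) * inner gx v \<le> h y - (1 / L) * inner gy v + 1 / (2 * L) * inner v v"
    using a b e1 e2 e3 by linarith
  then have "h y \<ge> h x + inner gx (y - x) + (1 / L) * (inner gy v - inner gx v) - 1 / (2 * L) * inner v v"
    by (simp add: algebra_simps)
  moreover have "(1 / L) * (inner gy v - inner gx v) - 1 / (2 * L) * inner v v = 1 / (2 * L) * inner v v"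
    using L e5 by (simp add: field_simps)
  ultimately show ?thesis unfolding e4 by linarith
qed

lemma interp:
  fixes f :: "'a::euclidean_space \<Rightarrow> real"
  assumes F: "FmuL \<mu> L f" and gx: "Gx \<in> subdiff \<mu> f x" and gy: "Gy \<in> subdiff \<mu> f y"
  shows "f y \<ge> f x + inner Gx (y - x) + \<mu>/2 * norm (y - x)^2
           + inv_ext (L - ereal \<mu>) / 2 * norm (Gx - Gy - \<mu> *\<^sub>R (x - y))^2"
proof -
  define h where "h = (\<lambda>y. f y - \<mu> / 2 * norm y ^ 2)"
  obtain ggx where ggx: "Gx = ggx + \<mu> *\<^sub>R x" "\<forall>z. h z \<ge> h x + inner ggx (z - x)"
    using gx unfolding subdiff_def cvx_subdiff_def h_def by auto
  obtain ggy where ggy: "Gy = ggy + \<mu> *\<^sub>R y" "\<forall>z. h z \<ge> h y + inner ggy (z - y)"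
    using gy unfolding subdiff_def cvx_subdiff_def h_def by auto
  have dd: "ggx - ggy = Gx - Gy - \<mu> *\<^sub>R (x - y)"
    using ggx(1) ggy(1) by (simp add: algebra_simps)
  have key: "h y \<ge> h x + inner ggx (y - x) + inv_ext (L - ereal \<mu>) / 2 * norm (ggx - ggy)^2"
  proof (cases "L = \<infinity>")
    case True
    then show ?thesis using ggx(2) by (simp add: inv_ext_def)
  next
    case False
    have lt: "ereal \<mu> < L" using F by (simp add: FmuL_def)
    then obtain Lr where Lr: "L = ereal Lr" using False by (cases L) auto
    have Lmu: "Lr - \<mu> > 0" using lt Lr by simp
    have inv: "inv_ext (L - ereal \<mu>) = 1 / (Lr - \<mu>)" using Lr by (simp add: inv_ext_def)
    have cv0: "convex_on UNIV (\<lambda>x. Lr / 2 * norm x ^ 2 - f x)"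
      using F False Lr by (simp add: FmuL_def)
    have "(\<lambda>x. Lr / 2 * norm x ^ 2 - f x) = (\<lambda>y. (Lr - \<mu>)/2 * norm y ^ 2 - h y)"
      by (rule ext) (simp add: h_def field_simps)
    with cv0 have cv: "convex_on UNIV (\<lambda>y. (Lr - \<mu>)/2 * norm y ^ 2 - h y)" by simp
    have "h y \<ge> h x + inner ggx (y - x) + 1 / (2 * (Lr - \<mu>)) * norm (ggx - ggy) ^ 2"
      by (rule interp_h[OF cv Lmu ggx(2) ggy(2)])
    then show ?thesis using inv by (simp add: mult.commute)
  qed
  have i1: "inner ggx (y - x) = inner Gx (y - x) - \<mu> * inner x (y - x)"
    using ggx(1) by (simp add: inner_add_left)
  have i2: "\<mu>/2 * norm (y - x)^2 = \<mu>/2 * norm y^2 - \<mu>/2 * norm x^2 - \<mu> * inner x (y - x)"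
    unfolding power2_norm_eq_inner
    by (simp add: inner_diff_left inner_diff_right inner_commute algebra_simps)
  show ?thesis using key i1 i2 unfolding dd h_def by linarith
qed

lemma argmin_aux: fixes hz hx hy t gw m xw ww :: real
  shows "hz \<ge> hx + t * gw - m * t * xw - m / 2 * t^2 * ww \<Longrightarrow> hz \<le> (1 - t) * hx + t * hy \<Longrightarrow>
     t * (hx + (gw - m * xw)) \<le> t * (hy + t * (m / 2 * ww))"
  by (simp add: field_simps power2_eq_square)

lemma argmin_subdiff:
  fixes f :: "'a::euclidean_space \<Rightarrow> real"
  assumes F: "FmuL \<mu> L f" and xp: "\<forall>w. f xp - inner g xp \<le> f w - inner g w"
  shows "g \<in> subdiff \<mu> f xp"
proof -
  define h where "h = (\<lambda>y. f y - \<mu> / 2 * norm y ^ 2)"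
  have cv: "convex_on UNIV h" using F by (simp add: FmuL_def h_def)
  have "h y \<ge> h xp + inner (g - \<mu> *\<^sub>R xp) (y - xp)" for y
  proof -
    define w where "w = y - xp"
    have "h xp + inner (g - \<mu> *\<^sub>R xp) w \<le> h y + t * (\<mu> / 2 * inner w w)" if t: "t > 0" "t \<le> 1" for t
    proof -
      define z where "z = (1 - t) *\<^sub>R xp + t *\<^sub>R y"
      have zz: "z = xp + t *\<^sub>R w" by (simp add: z_def w_def algebra_simps)
      have c: "h z \<le> (1 - t) * h xp + t * h y"
        using convex_onD[OF cv, of t xp y] t by (simp add: z_def)
      have a: "f xp - inner g xp \<le> f z - inner g z" using xp by blast
      have nz: "norm z ^ 2 = norm xp ^ 2 + 2 * t * inner xp w + t^2 * inner w w"
      proof -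
        have "inner (xp + t *\<^sub>R w) (xp + t *\<^sub>R w) = inner xp xp + 2 * t * inner xp w + t^2 * inner w w"
          by (simp add: inner_add_left inner_add_right inner_commute[of w xp] power2_eq_square algebra_simps)
        then show ?thesis unfolding zz power2_norm_eq_inner .
      qed
      have gz: "inner g z = inner g xp + t * inner g w" by (simp add: zz inner_add_right)
      have mz: "\<mu> / 2 * norm z ^ 2 = \<mu> / 2 * norm xp ^ 2 + \<mu> * t * inner xp w + \<mu> / 2 * t^2 * inner w w"
        unfolding nz by (simp add: algebra_simps)
      have "h z \<ge> h xp + t * inner g w - \<mu> * t * inner xp w - \<mu> / 2 * t^2 * inner w w"
        using a mz gz unfolding h_def by linarith
      from argmin_aux[OF this c]
      have "t * (h xp + (inner g w - \<mu> * inner xp w)) \<le> t * (h y + t * (\<mu> / 2 * inner w w))" .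
      then have "t * (h xp + inner (g - \<mu> *\<^sub>R xp) w) \<le> t * (h y + t * (\<mu> / 2 * inner w w))"
        by (simp add: inner_diff_left)
      then show ?thesis using t by simp
    qed
    then have "h xp + inner (g - \<mu> *\<^sub>R xp) w \<le> h y"
      by (rule eps_lemma[where K = "\<mu> / 2 * inner w w"])
    then show ?thesis by (simp add: w_def)
  qed
  then have "g - \<mu> *\<^sub>R xp \<in> cvx_subdiff (\<lambda>y. f y - \<mu> / 2 * norm y ^ 2) xp"
    by (simp add: cvx_subdiff_def h_def)
  then have "\<exists>g'. g = g' + \<mu> *\<^sub>R xp \<and> g' \<in> cvx_subdiff (\<lambda>y. f y - \<mu> / 2 * norm y ^ 2) xp"
    by (intro exI[of _ "g - \<mu> *\<^sub>R xp"]) simp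
  then show ?thesis unfolding subdiff_def by blast
qed

lemma cert_scalar:
  fixes f1x f1p f2x f2p gd pp qq dd pd qd m n c1 c2 \<sigma> \<sigma>p \<beta> \<epsilon> \<alpha> \<gamma> :: real
  assumes I1: "f1p \<ge> f1x - (gd + pd) + m/2 * dd + c1/2 * (pp - 2 * m * pd + m^2 * dd)"
    and I2: "f1x \<ge> f1p + gd + m/2 * dd + c1/2 * (pp - 2 * m * pd + m^2 * dd)"
    and I3: "f2p \<ge> f2x - gd + n/2 * dd + c2/2 * (qq - 2 * n * qd + n^2 * dd)"
    and I4: "f2x \<ge> f2p + (gd - qd) + n/2 * dd + c2/2 * (qq - 2 * n * qd + n^2 * dd)"
    and S1: "pp + 2 * \<alpha> * pd + \<alpha>^2 * dd \<ge> 0"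
    and S2: "qq + 2 * \<gamma> * qd + \<gamma>^2 * dd \<ge> 0"
    and dd: "dd \<ge> 0"
    and b1: "\<beta> \<ge> 1" and e1: "\<epsilon> \<ge> 1"
    and A: "\<beta> * c1 - \<sigma> \<ge> 0" and C: "\<epsilon> * c2 - \<sigma>p \<ge> 0"
    and P: "(\<beta> * c1 - \<sigma>) * \<alpha> = - ((\<beta> - 1)/2 + \<beta> * c1 * m)"
    and Q: "(\<epsilon> * c2 - \<sigma>p) * \<gamma> = - ((\<epsilon> - 1)/2 + \<epsilon> * c2 * n)"
    and K: "\<beta> * m + \<epsilon> * n + \<beta> * c1 * m^2 + \<epsilon> * c2 * n^2
             + \<alpha> * ((\<beta> - 1)/2 + \<beta> * c1 * m) + \<gamma> * ((\<epsilon> - 1)/2 + \<epsilon> * c2 * n) \<ge> 0"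
  shows "f1x - f2x - (f1p - f2p) \<ge> \<sigma> * (1/2) * pp + \<sigma>p * (1/2) * qq"
proof -
  define s1 where "s1 = f1p - (f1x - (gd + pd) + m/2 * dd + c1/2 * (pp - 2 * m * pd + m^2 * dd))"
  define s2 where "s2 = f1x - (f1p + gd + m/2 * dd + c1/2 * (pp - 2 * m * pd + m^2 * dd))"
  define s3 where "s3 = f2p - (f2x - gd + n/2 * dd + c2/2 * (qq - 2 * n * qd + n^2 * dd))"
  define s4 where "s4 = f2x - (f2p + (gd - qd) + n/2 * dd + c2/2 * (qq - 2 * n * qd + n^2 * dd))"
  define A where "A = \<beta> * c1 - \<sigma>"
  define C where "C = \<epsilon> * c2 - \<sigma>p"
  define Kv where "Kv = \<beta> * m + \<epsilon> * n + \<beta> * c1 * m^2 + \<epsilon> * c2 * n^2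
             + \<alpha> * ((\<beta> - 1)/2 + \<beta> * c1 * m) + \<gamma> * ((\<epsilon> - 1)/2 + \<epsilon> * c2 * n)"
  have ns: "s1 \<ge> 0" "s2 \<ge> 0" "s3 \<ge> 0" "s4 \<ge> 0"
    using I1 I2 I3 I4 by (auto simp: s1_def s2_def s3_def s4_def)
  have t1: "(\<beta> - 1) * s1 \<ge> 0" using ns b1 by simp
  have t2: "(\<beta> + 1) * s2 \<ge> 0" using ns b1 by simp
  have t3: "(\<epsilon> + 1) * s3 \<ge> 0" using ns e1 by simp
  have t4: "(\<epsilon> - 1) * s4 \<ge> 0" using ns e1 by simp
  have t5: "A * (pp + 2 * \<alpha> * pd + \<alpha>^2 * dd) \<ge> 0" using A S1 by (simp add: A_def)
  have t6: "C * (qq + 2 * \<gamma> * qd + \<gamma>^2 * dd) \<ge> 0" using C S2 by (simp add: C_def)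
  have t7: "Kv * dd \<ge> 0" using K dd by (simp add: Kv_def)
  have e5: "A * (pp + 2 * \<alpha> * pd + \<alpha>^2 * dd) = A * pp - 2 * ((\<beta> - 1)/2 + \<beta> * c1 * m) * pd
      - \<alpha> * ((\<beta> - 1)/2 + \<beta> * c1 * m) * dd"
  proof -
    have "A * (pp + 2 * \<alpha> * pd + \<alpha>^2 * dd) = A * pp + 2 * (A * \<alpha>) * pd + \<alpha> * (A * \<alpha>) * dd"
      by (simp add: algebra_simps power2_eq_square)
    then show ?thesis unfolding A_def P by (simp add: algebra_simps)
  qed
  have e6: "C * (qq + 2 * \<gamma> * qd + \<gamma>^2 * dd) = C * qq - 2 * ((\<epsilon> - 1)/2 + \<epsilon> * c2 * n) * qd
      - \<gamma> * ((\<epsilon> - 1)/2 + \<epsilon> * c2 * n) * dd"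
  proof -
    have "C * (qq + 2 * \<gamma> * qd + \<gamma>^2 * dd) = C * qq + 2 * (C * \<gamma>) * qd + \<gamma> * (C * \<gamma>) * dd"
      by (simp add: algebra_simps power2_eq_square)
    then show ?thesis unfolding C_def Q by (simp add: algebra_simps)
  qed
  have iden: "2 * ((f1x - f2x - (f1p - f2p)) - (\<sigma> * (1/2) * pp + \<sigma>p * (1/2) * qq))
     = (\<beta> - 1) * s1 + (\<beta> + 1) * s2 + (\<epsilon> + 1) * s3 + (\<epsilon> - 1) * s4
       + (A * pp - 2 * ((\<beta> - 1)/2 + \<beta> * c1 * m) * pd - \<alpha> * ((\<beta> - 1)/2 + \<beta> * c1 * m) * dd)
       + (C * qq - 2 * ((\<epsilon> - 1)/2 + \<epsilon> * c2 * n) * qd - \<gamma> * ((\<epsilon> - 1)/2 + \<epsilon> * c2 * n) * dd)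
       + Kv * dd"
    unfolding s1_def s2_def s3_def s4_def A_def C_def Kv_def
    by (simp add: field_simps power2_eq_square)
  have t5': "0 \<le> A * pp - 2 * ((\<beta> - 1)/2 + \<beta> * c1 * m) * pd - \<alpha> * ((\<beta> - 1)/2 + \<beta> * c1 * m) * dd"
    using t5 unfolding e5 .
  have t6': "0 \<le> C * qq - 2 * ((\<epsilon> - 1)/2 + \<epsilon> * c2 * n) * qd - \<gamma> * ((\<epsilon> - 1)/2 + \<epsilon> * c2 * n) * dd"
    using t6 unfolding e6 .
  have "0 \<le> 2 * ((f1x - f2x - (f1p - f2p)) - (\<sigma> * (1/2) * pp + \<sigma>p * (1/2) * qq))"
    unfolding iden by (intro add_nonneg_nonneg t1 t2 t3 t4 t5' t6' t7)
  then show ?thesis by (simp add: field_simps)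
qed

definition cert_ok :: "real \<Rightarrow> real \<Rightarrow> real \<Rightarrow> real \<Rightarrow> real \<Rightarrow> real \<Rightarrow> bool" where
  "cert_ok m n c1 c2 \<sigma> \<sigma>p \<longleftrightarrow> (\<exists>\<beta> \<epsilon> \<alpha> \<gamma>. \<beta> \<ge> 1 \<and> \<epsilon> \<ge> 1 \<and> \<beta> * c1 - \<sigma> \<ge> 0 \<and> \<epsilon> * c2 - \<sigma>p \<ge> 0 \<and>
     (\<beta> * c1 - \<sigma>) * \<alpha> = - ((\<beta> - 1)/2 + \<beta> * c1 * m) \<and>
     (\<epsilon> * c2 - \<sigma>p) * \<gamma> = - ((\<epsilon> - 1)/2 + \<epsilon> * c2 * n) \<and>
     \<beta> * m + \<epsilon> * n + \<beta> * c1 * m^2 + \<epsilon> * c2 * n^2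
             + \<alpha> * ((\<beta> - 1)/2 + \<beta> * c1 * m) + \<gamma> * ((\<epsilon> - 1)/2 + \<epsilon> * c2 * n) \<ge> 0)"

lemma cert_okI:
  assumes "\<beta> \<ge> 1" "\<epsilon> \<ge> 1" "\<beta> * c1 - \<sigma> \<ge> 0" "\<epsilon> * c2 - \<sigma>p \<ge> 0"
    "(\<beta> * c1 - \<sigma>) * \<alpha> = - ((\<beta> - 1)/2 + \<beta> * c1 * m)"
    "(\<epsilon> * c2 - \<sigma>p) * \<gamma> = - ((\<epsilon> - 1)/2 + \<epsilon> * c2 * n)"
    "\<beta> * m + \<epsilon> * n + \<beta> * c1 * m^2 + \<epsilon> * c2 * n^2
             + \<alpha> * ((\<beta> - 1)/2 + \<beta> * c1 * m) + \<gamma> * ((\<epsilon> - 1)/2 + \<epsilon> * c2 * n) \<ge> 0"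
  shows "cert_ok m n c1 c2 \<sigma> \<sigma>p"
  unfolding cert_ok_def using assms by blast

lemma ge0_by_mult: fixes x y z :: real
  assumes "x * y = z" "y > 0" "z \<ge> 0" shows "x \<ge> 0"
proof (rule ccontr)
  assume "\<not> x \<ge> 0" then have "x * y < 0" using assms(2) by (simp add: mult_neg_pos)
  then show False using assms by simp
qed

lemma case6:
  fixes m n a l1 c1 c2 \<sigma> :: real
  assumes m: "m \<ge> 0" and am: "a > m" and na: "n \<ge> a" and c2: "c2 \<ge> 0"
    and l1: "a * l1 = 1" and c1: "c1 * (a - m) = 1" and s: "\<sigma> * a^2 = a + n"
  shows "cert_ok m n c1 c2 \<sigma> 0"
proof (rule cert_okI[where \<beta> = "1 + 2*n*l1" and \<epsilon> = 1 and \<alpha> = "-a" and \<gamma> = "-n"])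
  have a0: "a > 0" using m am by linarith
  have "l1 = 1/a" using l1 a0 by (simp add: field_simps mult.commute)
  then have l1p: "l1 > 0" using a0 by simp
  show "1 + 2*n*l1 \<ge> 1" using a0 na l1p by simp
  show "(1::real) \<ge> 1" by simp
  have "((1 + 2*n*l1) * c1 - \<sigma>) * (a^2 * (a - m)) = a*n + a*m + n*m"
    using l1 c1 s by algebra
  then show "(1 + 2*n*l1) * c1 - \<sigma> \<ge> 0"
    by (rule ge0_by_mult) (use a0 am na m in auto)
  show "1 * c2 - 0 \<ge> 0" using c2 by simp
  show "((1 + 2*n*l1) * c1 - \<sigma>) * (-a) = - ((1 + 2*n*l1 - 1)/2 + (1 + 2*n*l1) * c1 * m)"
    using l1 c1 s a0 by algebra
  show "(1 * c2 - 0) * (-n) = - ((1 - 1)/2 + 1 * c2 * n)" by simp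
  have "(1 + 2*n*l1) * m + 1 * n + (1 + 2*n*l1) * c1 * m^2 + 1 * c2 * n^2
     + (-a) * ((1 + 2*n*l1 - 1)/2 + (1 + 2*n*l1) * c1 * m) + (-n) * ((1 - 1)/2 + 1 * c2 * n) = 0"
    using l1 c1 by algebra
  then show "(1 + 2*n*l1) * m + 1 * n + (1 + 2*n*l1) * c1 * m^2 + 1 * c2 * n^2
     + (-a) * ((1 + 2*n*l1 - 1)/2 + (1 + 2*n*l1) * c1 * m) + (-n) * ((1 - 1)/2 + 1 * c2 * n) \<ge> 0" by simp
qed

lemma case1:
  fixes m n b l1 l2 c1 c2 \<sigma> \<sigma>p E :: real
  assumes m: "m \<ge> 0" and l1: "l1 \<ge> 0" and l12: "l1 \<le> l2" and ml1: "m * l1 < 1"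
    and bl2: "b * l2 = 1" and b0: "b > 0" and bn: "b > n"
    and c1: "c1 * (1 - m * l1) = l1" and c2: "c2 * (b - n) = 1"
    and s: "\<sigma> = (1 - m * l2) * c1"
    and sp: "\<sigma>p * (1 - m * l1) = l2 * (1 - m * l1 + m * (l2 - l1))"
    and E: "n < 0 \<Longrightarrow> - n * m * E = (b + n) * (l1 - l2) * m - n + n * m * l1"
    and cond: "n \<ge> 0 \<or> (n < 0 \<and> m > 0 \<and> E \<le> 0)"
  shows "cert_ok m n c1 c2 \<sigma> \<sigma>p"
proof -
  define e where "e = 2 * \<sigma>p * b - 1"
  have l2p: "l2 > 0" using bl2 b0 by (metis mult_pos_pos not_less_iff_gr_or_eq zero_less_mult_pos zero_less_one)
  have d1: "1 - m * l1 > 0" using ml1 by simp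
  have c1p: "c1 \<ge> 0" by (rule ge0_by_mult[OF c1 d1 l1])
  have "(\<sigma>p * b - 1) * (1 - m * l1) = m * (l2 - l1)" using sp bl2 by algebra
  then have spb: "\<sigma>p * b - 1 \<ge> 0" by (rule ge0_by_mult) (use d1 m l12 in auto)
  have spp: "\<sigma>p \<ge> 0"
  proof -
    have "\<sigma>p * b \<ge> 1" using spb by simp
    then show ?thesis using b0 by (metis ge0_by_mult less_le_not_le linorder_linear order.trans zero_le_one)
  qed
  have r: "\<sigma>p * (b + n) - 1 \<ge> 0"
    using cond
  proof
    assume "n \<ge> 0"
    then have "\<sigma>p * n \<ge> 0" using spp by simp
    then show ?thesis using spb by (simp add: algebra_simps)
  next
    assume h: "n < 0 \<and> m > 0 \<and> E \<le> 0"
    have E': "- n * m * E = (b + n) * (l1 - l2) * m - n + n * m * l1" using E h by simp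
    have eq: "(\<sigma>p * (b + n) - 1) * (1 - m * l1) = n * l2 * m * E"
      using sp bl2 E' by algebra
    have nn: "n * l2 * m * E \<ge> 0"
    proof -
      have "n * E \<ge> 0" using h by (simp add: mult_nonpos_nonpos)
      then have "(n * E) * (l2 * m) \<ge> 0" using h l2p by simp
      then show ?thesis by (simp add: algebra_simps)
    qed
    show ?thesis by (rule ge0_by_mult[OF eq d1 nn])
  qed
  show ?thesis
  proof (rule cert_okI[where \<beta> = 1 and \<epsilon> = e and \<alpha> = "-b" and \<gamma> = "-b"])
    show "(1::real) \<ge> 1" by simp
    show "e \<ge> 1" using spb by (simp add: e_def)
    have "1 * c1 - \<sigma> = c1 * m * l2" by (simp add: s algebra_simps)
    then show "1 * c1 - \<sigma> \<ge> 0" using c1p m l2p by simp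
    have "(e * c2 - \<sigma>p) * (b - n) = \<sigma>p * (b + n) - 1" unfolding e_def using c2 by algebra
    then show "e * c2 - \<sigma>p \<ge> 0" by (rule ge0_by_mult) (use bn r in auto)
    show "(1 * c1 - \<sigma>) * (-b) = - ((1 - 1)/2 + 1 * c1 * m)" using s bl2 by algebra
    show "(e * c2 - \<sigma>p) * (-b) = - ((e - 1)/2 + e * c2 * n)" unfolding e_def using c2 by algebra
    have k1: "1 * m + e * n + 1 * c1 * m^2 + e * c2 * n^2
       + (-b) * ((1 - 1)/2 + 1 * c1 * m) + (-b) * ((e - 1)/2 + e * c2 * n)
       = (m + c1 * m * (m - b) - b * (\<sigma>p * b - 1)) + e * n * (1 - c2 * (b - n))"
      unfolding e_def by algebra
    have k2: "(m + c1 * m * (m - b) - b * (\<sigma>p * b - 1)) * (1 - m * l1) = 0"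
    proof -
      have e1: "(m + c1 * m * (m - b) - b * (\<sigma>p * b - 1)) * (1 - m * l1)
         = m * (1 - m * l1) + m * (m - b) * (c1 * (1 - m * l1)) - b * b * (\<sigma>p * (1 - m * l1)) + b * (1 - m * l1)"
        by (simp add: algebra_simps)
      have e2: "b * b * (l2 * (1 - m * l1 + m * (l2 - l1))) = b * (1 - m * l1 + m * (l2 - l1))"
        using bl2 by (metis mult.assoc mult.left_commute mult_1)
      show ?thesis unfolding e1 c1 sp e2 using bl2 by (simp add: algebra_simps)
    qed
    have "(1 * m + e * n + 1 * c1 * m^2 + e * c2 * n^2
       + (-b) * ((1 - 1)/2 + 1 * c1 * m) + (-b) * ((e - 1)/2 + e * c2 * n)) = 0"
      unfolding k1 using k2 d1 c2 by simp
    then show "1 * m + e * n + 1 * c1 * m^2 + e * c2 * n^2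
       + (-b) * ((1 - 1)/2 + 1 * c1 * m) + (-b) * ((e - 1)/2 + e * c2 * n) \<ge> 0" by simp
  qed
qed

lemma case2:
  fixes m n a l1 l2 c1 c2 \<sigma> \<sigma>p :: real
  assumes m: "m \<ge> 0" and n: "n \<ge> 0" and am: "a > m" and al1: "a * l1 = 1"
    and l2: "l2 \<ge> 0" and l21: "l2 \<le> l1" and nl2: "n * l2 < 1"
    and c1: "c1 * (a - m) = 1" and c2: "c2 * (1 - n * l2) = l2"
    and s: "\<sigma> * (1 - n * l2) = l1 * (1 - n * l2 + n * (l1 - l2))"
    and sp: "\<sigma>p = (1 - n * l1) * c2"
  shows "cert_ok m n c1 c2 \<sigma> \<sigma>p"
proof -
  define b where "b = 2 * \<sigma> * a - 1"
  have a0: "a > 0" using am m by linarith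
  have d2: "1 - n * l2 > 0" using nl2 by simp
  have c2p: "c2 \<ge> 0" by (rule ge0_by_mult[OF c2 d2 l2])
  have l1p: "l1 > 0"
  proof -
    have "l1 = 1/a" using al1 a0 by (simp add: field_simps mult.commute)
    then show ?thesis using a0 by simp
  qed
  have "(\<sigma> * a - 1) * (1 - n * l2) = n * (l1 - l2)" using s al1 by algebra
  then have sa: "\<sigma> * a - 1 \<ge> 0" by (rule ge0_by_mult) (use d2 n l21 in auto)
  have sp0: "\<sigma> \<ge> 0"
  proof -
    have "\<sigma> * a \<ge> 1" using sa by simp
    then show ?thesis using a0 by (metis ge0_by_mult less_le_not_le linorder_linear order.trans zero_le_one)
  qed
  show ?thesis
  proof (rule cert_okI[where \<beta> = b and \<epsilon> = 1 and \<alpha> = "-a" and \<gamma> = "-a"])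
    show "b \<ge> 1" using sa by (simp add: b_def)
    show "(1::real) \<ge> 1" by simp
    have "(b * c1 - \<sigma>) * (a - m) = (\<sigma> * a - 1) + \<sigma> * m" unfolding b_def using c1 by algebra
    then show "b * c1 - \<sigma> \<ge> 0" by (rule ge0_by_mult) (use am sa sp0 m in auto)
    have "1 * c2 - \<sigma>p = c2 * n * l1" by (simp add: sp algebra_simps)
    then show "1 * c2 - \<sigma>p \<ge> 0" using c2p n l1p by simp
    show "(b * c1 - \<sigma>) * (-a) = - ((b - 1)/2 + b * c1 * m)" unfolding b_def using c1 by algebra
    show "(1 * c2 - \<sigma>p) * (-a) = - ((1 - 1)/2 + 1 * c2 * n)" using sp al1 by algebra
    have "(b * m + 1 * n + b * c1 * m^2 + 1 * c2 * n^2
       + (-a) * ((b - 1)/2 + b * c1 * m) + (-a) * ((1 - 1)/2 + 1 * c2 * n)) * (1 - n * l2) = 0"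
      unfolding b_def using c1 c2 s al1 by algebra
    then have "b * m + 1 * n + b * c1 * m^2 + 1 * c2 * n^2
       + (-a) * ((b - 1)/2 + b * c1 * m) + (-a) * ((1 - 1)/2 + 1 * c2 * n) = 0" using d2 by simp
    then show "b * m + 1 * n + b * c1 * m^2 + 1 * c2 * n^2
       + (-a) * ((b - 1)/2 + b * c1 * m) + (-a) * ((1 - 1)/2 + 1 * c2 * n) \<ge> 0" by simp
  qed
qed

lemma case4:
  fixes m n b c1 c2 \<sigma>p :: real
  assumes m: "m > 0" and n: "n < 0" and mn: "m + n > 0" and c1: "c1 \<ge> 0"
    and c2: "c2 * (b - n) = 1" and bn: "b > n" and sp: "\<sigma>p * n^2 = m + n"
    and cond: "m * b + n * b + m * n \<le> 0"
  shows "cert_ok m n c1 c2 0 \<sigma>p"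
proof -
  define e where "e = 1 - 2 * \<sigma>p * n"
  have n2: "n^2 > 0" using n by simp
  have spp: "\<sigma>p \<ge> 0" by (rule ge0_by_mult[OF sp n2]) (use mn in simp)
  show ?thesis
  proof (rule cert_okI[where \<beta> = 1 and \<epsilon> = e and \<alpha> = "-m" and \<gamma> = "-n"])
    show "(1::real) \<ge> 1" by simp
    have "\<sigma>p * n \<le> 0" using spp n by (simp add: mult_nonneg_nonpos)
    then show "e \<ge> 1" by (simp add: e_def)
    show "1 * c1 - 0 \<ge> 0" using c1 by simp
    have r: "(1 - \<sigma>p * (b + n)) * n^2 = - (m * b + n * b + m * n)" using sp by algebra
    have r0: "1 - \<sigma>p * (b + n) \<ge> 0" by (rule ge0_by_mult[OF r n2]) (use cond in simp)
    have "(e * c2 - \<sigma>p) * (b - n) = 1 - \<sigma>p * (b + n)" unfolding e_def using c2 by algebra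
    then show "e * c2 - \<sigma>p \<ge> 0" by (rule ge0_by_mult) (use bn r0 in auto)
    show "(1 * c1 - 0) * (-m) = - ((1 - 1)/2 + 1 * c1 * m)" by simp
    show "(e * c2 - \<sigma>p) * (-n) = - ((e - 1)/2 + e * c2 * n)" unfolding e_def by algebra
    have "1 * m + e * n + 1 * c1 * m^2 + e * c2 * n^2
       + (-m) * ((1 - 1)/2 + 1 * c1 * m) + (-n) * ((e - 1)/2 + e * c2 * n) = 0"
      unfolding e_def using sp by algebra
    then show "1 * m + e * n + 1 * c1 * m^2 + e * c2 * n^2
       + (-m) * ((1 - 1)/2 + 1 * c1 * m) + (-n) * ((e - 1)/2 + e * c2 * n) \<ge> 0" by simp
  qed
qed

lemma case5:
  fixes m n b c1 c2 \<sigma>p :: real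
  assumes b0: "b > 0" and bm: "b \<le> m" and c1: "c1 \<ge> 0"
    and c2: "c2 * (b - n) = 1" and bn: "b > n" and sp: "\<sigma>p * b^2 = b + m"
    and cond: "m * b + n * b + m * n \<ge> 0"
  shows "cert_ok m n c1 c2 0 \<sigma>p"
proof -
  define e where "e = 2 * \<sigma>p * b - 1"
  have eb: "e * b = b + 2 * m" unfolding e_def using sp by algebra
  have b2: "b^2 > 0" using b0 by simp
  show ?thesis
  proof (rule cert_okI[where \<beta> = 1 and \<epsilon> = e and \<alpha> = "-m" and \<gamma> = "-b"])
    show "(1::real) \<ge> 1" by simp
    have "(e - 1) * b = 2 * m" using eb by (simp add: algebra_simps)
    then have "e - 1 \<ge> 0" by (rule ge0_by_mult) (use b0 bm in auto)
    then show "e \<ge> 1" by simp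
    show "1 * c1 - 0 \<ge> 0" using c1 by simp
    have r: "(\<sigma>p * (b + n) - 1) * b^2 = m * b + n * b + m * n" using sp by algebra
    have r0: "\<sigma>p * (b + n) - 1 \<ge> 0" by (rule ge0_by_mult[OF r b2 cond])
    have "(e * c2 - \<sigma>p) * (b - n) = \<sigma>p * (b + n) - 1" unfolding e_def using c2 by algebra
    then show "e * c2 - \<sigma>p \<ge> 0" by (rule ge0_by_mult) (use bn r0 in auto)
    show "(1 * c1 - 0) * (-m) = - ((1 - 1)/2 + 1 * c1 * m)" by simp
    show "(e * c2 - \<sigma>p) * (-b) = - ((e - 1)/2 + e * c2 * n)" unfolding e_def using c2 by algebra
    have "1 * m + e * n + 1 * c1 * m^2 + e * c2 * n^2
       + (-m) * ((1 - 1)/2 + 1 * c1 * m) + (-b) * ((e - 1)/2 + e * c2 * n)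
       = m - (e * b - b) / 2 + e * n * (1 - c2 * (b - n))"
      by (simp add: field_simps power2_eq_square)
    also have "\<dots> = 0" using eb c2 by simp
    finally show "1 * m + e * n + 1 * c1 * m^2 + e * c2 * n^2
       + (-m) * ((1 - 1)/2 + 1 * c1 * m) + (-b) * ((e - 1)/2 + e * c2 * n) \<ge> 0" by simp
  qed
qed

lemma case3_q:
  fixes m n l2 c2 B \<sigma>p :: real
  assumes m: "m > 0" and n: "n < 0" and l2: "l2 \<ge> 0" and c2: "c2 * (1 - n * l2) = l2"
    and B: "B * m * n = n + m + l2 * m * n" and B0: "B \<le> 0" and sp: "\<sigma>p * (1 + n * l2) = l2"
  shows "\<exists>e. e \<ge> 1 \<and> e * c2 - \<sigma>p = 0 \<and> (e - 1)/2 + e * c2 * n = 0 \<and> (e * n + e * c2 * n^2) * (1 + n * l2) = n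
     \<and> 1 + n * l2 > 0 \<and> B * m * n \<ge> 0"
proof -
  have Bmn: "B * m * n \<ge> 0"
  proof -
    have "m * n < 0" using m n by (simp add: mult_pos_neg)
    then have "B * (m * n) \<ge> 0" using B0 by (intro mult_nonpos_nonpos) auto
    then show ?thesis by (simp add: mult.assoc)
  qed
  have "m * (1 + n * l2) > 0"
  proof -
    have eq: "m * (1 + n * l2) = B * m * n - n" using B by (simp add: algebra_simps)
    show ?thesis unfolding eq using Bmn n by linarith
  qed
  then have d: "1 + n * l2 > 0" using m by (simp add: zero_less_mult_iff)
  have "n * l2 \<le> 0" using n l2 by (intro mult_nonpos_nonneg) auto
  then have d2: "1 - n * l2 > 0" by simp
  define e where "e = (1 - n * l2) / (1 + n * l2)"
  have er: "e * (1 + n * l2) = 1 - n * l2" unfolding e_def using d by simp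
  have "(e - 1) * (1 + n * l2) = - 2 * n * l2" using er by (simp add: algebra_simps)
  then have "e - 1 \<ge> 0" by (rule ge0_by_mult) (use d n l2 in \<open>auto simp: mult_nonpos_nonneg\<close>)
  then have e1: "e \<ge> 1" by simp
  have "(e * c2 - \<sigma>p) * ((1 - n * l2) * (1 + n * l2)) = 0"
  proof -
    have "(e * c2 - \<sigma>p) * ((1 - n * l2) * (1 + n * l2))
       = (e * (1 + n * l2)) * (c2 * (1 - n * l2)) - (\<sigma>p * (1 + n * l2)) * (1 - n * l2)"
      by (simp add: algebra_simps)
    then show ?thesis unfolding er c2 sp by simp
  qed
  then have C0: "e * c2 - \<sigma>p = 0" using d d2 by simp
  have "((e - 1)/2 + e * c2 * n) * ((1 - n * l2) * (1 + n * l2)) = 0"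
  proof -
    have "((e - 1)/2 + e * c2 * n) * ((1 - n * l2) * (1 + n * l2))
       = ((e * (1 + n * l2)) - (1 + n * l2)) * (1 - n * l2) / 2 + (e * (1 + n * l2)) * (c2 * (1 - n * l2)) * n"
      by (simp add: field_simps)
    also have "\<dots> = ((1 - n * l2) - (1 + n * l2)) * (1 - n * l2) / 2 + (1 - n * l2) * l2 * n"
      unfolding er c2 by simp
    also have "\<dots> = 0" by (simp add: field_simps)
    finally show ?thesis .
  qed
  then have Q0: "(e - 1)/2 + e * c2 * n = 0" using d d2 by simp
  have "(e * n + e * c2 * n^2) * (1 + n * l2) * (1 - n * l2) = n * (1 - n * l2)"
  proof -
    have "(e * n + e * c2 * n^2) * (1 + n * l2) * (1 - n * l2)
        = n * (e * (1 + n * l2)) * (1 - n * l2) + n^2 * (e * (1 + n * l2)) * (c2 * (1 - n * l2))"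
      by (simp add: algebra_simps power2_eq_square)
    then show ?thesis unfolding er c2 by (simp add: algebra_simps power2_eq_square)
  qed
  then have G2: "(e * n + e * c2 * n^2) * (1 + n * l2) = n" using d2 by simp
  show ?thesis using e1 C0 Q0 G2 d Bmn by blast
qed

lemma case3_fin:
  fixes m n a l1 c1 l2 c2 B \<sigma> \<sigma>p :: real
  assumes m: "m > 0" and n: "n < 0" and am: "a > m" and al1: "a * l1 = 1" and c1: "c1 * (a - m) = 1"
    and l2: "l2 \<ge> 0" and c2: "c2 * (1 - n * l2) = l2"
    and B: "B * m * n = n + m + l2 * m * n" and B0: "B \<le> 0"
    and s: "\<sigma> * (B - l1) = l1 * B" and sp: "\<sigma>p * (1 + n * l2) = l2"
  shows "cert_ok m n c1 c2 \<sigma> \<sigma>p"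
proof -
  obtain e where e1: "e \<ge> 1" and C0: "e * c2 - \<sigma>p = 0" and Q0: "(e - 1)/2 + e * c2 * n = 0"
    and G2: "(e * n + e * c2 * n^2) * (1 + n * l2) = n" and d: "1 + n * l2 > 0"
    using case3_q[OF m n l2 c2 B B0 sp] by blast
  have a0: "a > 0" using am m by linarith
  have l1p: "l1 > 0"
  proof -
    have "l1 = 1/a" using al1 a0 by (simp add: field_simps mult.commute)
    then show ?thesis using a0 by simp
  qed
  have "B * m \<le> 0" using B0 m by (intro mult_nonpos_nonneg) auto
  then have Bm: "1 - B * m > 0" by simp
  have Bl: "l1 - B > 0" using B0 l1p by simp
  have amp: "a - m > 0" using am by simp
  define al where "al = m * a * (B - l1) / (1 - B * m)"
  have alr: "al * (1 - B * m) = m * a * (B - l1)" unfolding al_def using Bm by simp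
  have Ar: "(1 * c1 - \<sigma>) * ((a - m) * (l1 - B)) = l1 * (1 - m * B)"
  proof -
    have "(1 * c1 - \<sigma>) * ((a - m) * (l1 - B)) = (c1 * (a - m)) * (l1 - B) + (\<sigma> * (B - l1)) * (a - m)"
      by (simp add: algebra_simps)
    then show ?thesis unfolding c1 s using al1 by (simp add: algebra_simps)
  qed
  have pp: "(a - m) * (l1 - B) > 0" using amp Bl by simp
  have "1 - m * B > 0" using Bm by (simp add: mult.commute)
  then have nn: "l1 * (1 - m * B) \<ge> 0" using l1p by simp
  have A0: "1 * c1 - \<sigma> \<ge> 0" by (rule ge0_by_mult[OF Ar pp nn])
  have AP: "(1 * c1 - \<sigma>) * al = - ((1 - 1)/2 + 1 * c1 * m)"
  proof -
    have "((1 * c1 - \<sigma>) * al + c1 * m) * ((a - m) * (l1 - B) * (1 - B * m))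
        = ((1 * c1 - \<sigma>) * ((a - m) * (l1 - B))) * (al * (1 - B * m)) + (c1 * (a - m)) * m * (l1 - B) * (1 - B * m)"
      by (simp add: algebra_simps)
    also have "\<dots> = l1 * (1 - m * B) * (m * a * (B - l1)) + m * (l1 - B) * (1 - B * m)"
      unfolding Ar alr c1 by simp
    also have "\<dots> = m * (1 - m * B) * (B - l1) * (a * l1 - 1)" by (simp add: algebra_simps)
    also have "\<dots> = 0" using al1 by simp
    finally have "((1 * c1 - \<sigma>) * al + c1 * m) * ((a - m) * (l1 - B) * (1 - B * m)) = 0" .
    then have "(1 * c1 - \<sigma>) * al + c1 * m = 0" using amp Bl Bm by simp
    then show ?thesis by simp
  qed
  have G1: "(m + c1 * m^2 + al * (c1 * m)) * (1 - B * m) = m"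
  proof -
    have "(m + c1 * m^2 + al * (c1 * m)) * (1 - B * m) * (a - m)
       = m * (a - m) * (1 - B * m) + m^2 * (c1 * (a - m)) * (1 - B * m) + (c1 * (a - m)) * (al * (1 - B * m)) * m"
      by (simp add: algebra_simps power2_eq_square)
    also have "\<dots> = m * (a - m) * (1 - B * m) + m^2 * (1 - B * m) + m * a * (B - l1) * m"
      unfolding c1 alr by simp
    also have "\<dots> = m * (a - m) + m * m * (1 - a * l1)" by (simp add: algebra_simps power2_eq_square)
    also have "\<dots> = m * (a - m)" using al1 by simp
    finally show ?thesis using amp by simp
  qed
  show ?thesis
  proof (rule cert_okI[where \<beta> = 1 and \<epsilon> = e and \<alpha> = al and \<gamma> = 0])
    show "(1::real) \<ge> 1" by simp
    show "e \<ge> 1" by (rule e1)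
    show "1 * c1 - \<sigma> \<ge> 0" by (rule A0)
    show "e * c2 - \<sigma>p \<ge> 0" using C0 by simp
    show "(1 * c1 - \<sigma>) * al = - ((1 - 1)/2 + 1 * c1 * m)" by (rule AP)
    show "(e * c2 - \<sigma>p) * 0 = - ((e - 1)/2 + e * c2 * n)" using Q0 by simp
    have "(1 * m + e * n + 1 * c1 * m^2 + e * c2 * n^2
       + al * ((1 - 1)/2 + 1 * c1 * m) + 0 * ((e - 1)/2 + e * c2 * n)) * ((1 - B * m) * (1 + n * l2))
       = ((m + c1 * m^2 + al * (c1 * m)) * (1 - B * m)) * (1 + n * l2) + ((e * n + e * c2 * n^2) * (1 + n * l2)) * (1 - B * m)"
      by (simp add: algebra_simps)
    also have "\<dots> = m * (1 + n * l2) + n * (1 - B * m)" unfolding G1 G2 by simp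
    also have "\<dots> = 0" using B by (simp add: algebra_simps)
    finally have "1 * m + e * n + 1 * c1 * m^2 + e * c2 * n^2
       + al * ((1 - 1)/2 + 1 * c1 * m) + 0 * ((e - 1)/2 + e * c2 * n) = 0" using Bm d by simp
    then show "1 * m + e * n + 1 * c1 * m^2 + e * c2 * n^2
       + al * ((1 - 1)/2 + 1 * c1 * m) + 0 * ((e - 1)/2 + e * c2 * n) \<ge> 0" by simp
  qed
qed

lemma case3_inf:
  fixes m n l2 c2 B \<sigma>p :: real
  assumes m: "m > 0" and n: "n < 0"
    and l2: "l2 \<ge> 0" and c2: "c2 * (1 - n * l2) = l2"
    and B: "B * m * n = n + m + l2 * m * n" and B0: "B \<le> 0"
    and sp: "\<sigma>p * (1 + n * l2) = l2"
  shows "cert_ok m n 0 c2 0 \<sigma>p"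
proof -
  obtain e where e1: "e \<ge> 1" and C0: "e * c2 - \<sigma>p = 0" and Q0: "(e - 1)/2 + e * c2 * n = 0"
    and G2: "(e * n + e * c2 * n^2) * (1 + n * l2) = n" and d: "1 + n * l2 > 0" and Bmn: "B * m * n \<ge> 0"
    using case3_q[OF m n l2 c2 B B0 sp] by blast
  show ?thesis
  proof (rule cert_okI[where \<beta> = 1 and \<epsilon> = e and \<alpha> = 0 and \<gamma> = 0])
    show "(1::real) \<ge> 1" by simp
    show "e \<ge> 1" by (rule e1)
    show "1 * 0 - 0 \<ge> (0::real)" by simp
    show "e * c2 - \<sigma>p \<ge> 0" using C0 by simp
    show "(1 * 0 - 0) * 0 = - ((1 - 1)/2 + 1 * 0 * m)" by simp
    show "(e * c2 - \<sigma>p) * 0 = - ((e - 1)/2 + e * c2 * n)" using Q0 by simp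
    have "(1 * m + e * n + 1 * 0 * m^2 + e * c2 * n^2
       + 0 * ((1 - 1)/2 + 1 * 0 * m) + 0 * ((e - 1)/2 + e * c2 * n)) * (1 + n * l2)
       = m * (1 + n * l2) + (e * n + e * c2 * n^2) * (1 + n * l2)"
      by (simp add: algebra_simps)
    also have "\<dots> = B * m * n" unfolding G2 using B by (simp add: algebra_simps)
    finally have "(1 * m + e * n + 1 * 0 * m^2 + e * c2 * n^2
       + 0 * ((1 - 1)/2 + 1 * 0 * m) + 0 * ((e - 1)/2 + e * c2 * n)) * (1 + n * l2) = B * m * n" .
    then show "1 * m + e * n + 1 * 0 * m^2 + e * c2 * n^2
       + 0 * ((1 - 1)/2 + 1 * 0 * m) + 0 * ((e - 1)/2 + e * c2 * n) \<ge> 0"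
      by (rule ge0_by_mult) (use d Bmn in auto)
  qed
qed


lemma norm_minus_sq: fixes u v :: "'a::real_inner"
  shows "norm (u - c *\<^sub>R v)^2 = inner u u - 2 * c * inner u v + c^2 * inner v v"
  unfolding power2_norm_eq_inner
  by (simp add: inner_diff_left inner_diff_right inner_commute[of v u] power2_eq_square algebra_simps)

lemma norm_plus_sq: fixes u v :: "'a::real_inner"
  shows "norm (u + c *\<^sub>R v)^2 = inner u u + 2 * c * inner u v + c^2 * inner v v"
  unfolding power2_norm_eq_inner
  by (simp add: inner_add_left inner_add_right inner_commute[of v u] power2_eq_square algebra_simps)

lemma assemble:
  fixes f1 f2 :: "'a::euclidean_space \<Rightarrow> real"
  assumes F1: "FmuL m L1 f1" and F2: "FmuL n L2 f2"
    and g1: "g1 \<in> subdiff m f1 x" and g2a: "g2 \<in> subdiff m f1 xp"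
    and g2: "g2 \<in> subdiff n f2 x" and g2p: "g2p \<in> subdiff n f2 xp"
    and ok: "cert_ok m n (inv_ext (L1 - ereal m)) (inv_ext (L2 - ereal n)) \<sigma> \<sigma>p"
  shows "f1 x - f2 x - (f1 xp - f2 xp) \<ge> \<sigma> * (1/2) * norm (g1 - g2)^2 + \<sigma>p * (1/2) * norm (g2 - g2p)^2"
proof -
  define c1 where "c1 = inv_ext (L1 - ereal m)"
  define c2 where "c2 = inv_ext (L2 - ereal n)"
  obtain \<beta> \<epsilon> \<alpha> \<gamma> where cert: "\<beta> \<ge> 1" "\<epsilon> \<ge> 1" "\<beta> * c1 - \<sigma> \<ge> 0" "\<epsilon> * c2 - \<sigma>p \<ge> 0"
     "(\<beta> * c1 - \<sigma>) * \<alpha> = - ((\<beta> - 1)/2 + \<beta> * c1 * m)"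
     "(\<epsilon> * c2 - \<sigma>p) * \<gamma> = - ((\<epsilon> - 1)/2 + \<epsilon> * c2 * n)"
     "\<beta> * m + \<epsilon> * n + \<beta> * c1 * m^2 + \<epsilon> * c2 * n^2
             + \<alpha> * ((\<beta> - 1)/2 + \<beta> * c1 * m) + \<gamma> * ((\<epsilon> - 1)/2 + \<epsilon> * c2 * n) \<ge> 0"
    using ok unfolding cert_ok_def c1_def c2_def by blast
  define d where "d = x - xp"
  define p where "p = g1 - g2"
  define q where "q = g2 - g2p"
  have i1: "f1 xp \<ge> f1 x + inner g1 (xp - x) + m/2 * norm (xp - x)^2 + c1 / 2 * norm (g1 - g2 - m *\<^sub>R (x - xp))^2"
    using interp[OF F1 g1 g2a] by (simp add: c1_def)
  have i2: "f1 x \<ge> f1 xp + inner g2 (x - xp) + m/2 * norm (x - xp)^2 + c1 / 2 * norm (g2 - g1 - m *\<^sub>R (xp - x))^2"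
    using interp[OF F1 g2a g1] by (simp add: c1_def)
  have i3: "f2 xp \<ge> f2 x + inner g2 (xp - x) + n/2 * norm (xp - x)^2 + c2 / 2 * norm (g2 - g2p - n *\<^sub>R (x - xp))^2"
    using interp[OF F2 g2 g2p] by (simp add: c2_def)
  have i4: "f2 x \<ge> f2 xp + inner g2p (x - xp) + n/2 * norm (x - xp)^2 + c2 / 2 * norm (g2p - g2 - n *\<^sub>R (xp - x))^2"
    using interp[OF F2 g2p g2] by (simp add: c2_def)
  have nd1: "norm (xp - x)^2 = inner d d" by (simp add: d_def power2_norm_eq_inner[symmetric] norm_minus_commute)
  have nd2: "norm (x - xp)^2 = inner d d" by (simp add: d_def power2_norm_eq_inner[symmetric])
  have np1: "norm (g1 - g2 - m *\<^sub>R (x - xp))^2 = inner p p - 2 * m * inner p d + m^2 * inner d d"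
    unfolding norm_minus_sq[symmetric] by (simp add: p_def d_def)
  have np2: "norm (g2 - g1 - m *\<^sub>R (xp - x))^2 = inner p p - 2 * m * inner p d + m^2 * inner d d"
  proof -
    have "g2 - g1 - m *\<^sub>R (xp - x) = - (p - m *\<^sub>R d)" by (simp add: p_def d_def algebra_simps)
    then show ?thesis unfolding norm_minus_sq[symmetric] by (simp add: norm_minus_commute)
  qed
  have nq1: "norm (g2 - g2p - n *\<^sub>R (x - xp))^2 = inner q q - 2 * n * inner q d + n^2 * inner d d"
    unfolding norm_minus_sq[symmetric] by (simp add: q_def d_def)
  have nq2: "norm (g2p - g2 - n *\<^sub>R (xp - x))^2 = inner q q - 2 * n * inner q d + n^2 * inner d d"
  proof -
    have "g2p - g2 - n *\<^sub>R (xp - x) = - (q - n *\<^sub>R d)" by (simp add: q_def d_def algebra_simps)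
    then show ?thesis unfolding norm_minus_sq[symmetric] by (simp add: norm_minus_commute)
  qed
  have in1: "inner g1 (xp - x) = - (inner g2 d + inner p d)"
  proof -
    have "g1 = g2 + p" "xp - x = - d" by (simp_all add: p_def d_def)
    then show ?thesis by (simp add: inner_add_left)
  qed
  have in2: "inner g2 (x - xp) = inner g2 d" by (simp add: d_def)
  have in3: "inner g2 (xp - x) = - inner g2 d"
  proof -
    have "xp - x = - d" by (simp add: d_def)
    then show ?thesis by simp
  qed
  have in4: "inner g2p (x - xp) = inner g2 d - inner q d"
  proof -
    have "g2p = g2 - q" by (simp add: q_def)
    then show ?thesis by (simp add: d_def inner_diff_left)
  qed
  have S1: "inner p p + 2 * \<alpha> * inner p d + \<alpha>^2 * inner d d \<ge> 0"
    using norm_plus_sq[of p \<alpha> d] by (metis zero_le_power2)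
  have S2: "inner q q + 2 * \<gamma> * inner q d + \<gamma>^2 * inner d d \<ge> 0"
    using norm_plus_sq[of q \<gamma> d] by (metis zero_le_power2)
  have dd: "inner d d \<ge> 0" by simp
  have main: "f1 x - f2 x - (f1 xp - f2 xp) \<ge> \<sigma> * (1/2) * inner p p + \<sigma>p * (1/2) * inner q q"
  proof (rule cert_scalar[where gd = "inner g2 d" and pd = "inner p d" and qd = "inner q d" and dd = "inner d d"
        and m = m and n = n, OF _ _ _ _ S1 S2 dd cert])
    show "f1 xp \<ge> f1 x - (inner g2 d + inner p d) + m/2 * inner d d + c1/2 * (inner p p - 2 * m * inner p d + m^2 * inner d d)"
      using i1 unfolding in1 nd1 np1 by simp
    show "f1 x \<ge> f1 xp + inner g2 d + m/2 * inner d d + c1/2 * (inner p p - 2 * m * inner p d + m^2 * inner d d)"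
      using i2 unfolding in2 nd2 np2 by simp
    show "f2 xp \<ge> f2 x - inner g2 d + n/2 * inner d d + c2/2 * (inner q q - 2 * n * inner q d + n^2 * inner d d)"
      using i3 unfolding in3 nd1 nq1 by simp
    show "f2 x \<ge> f2 xp + (inner g2 d - inner q d) + n/2 * inner d d + c2/2 * (inner q q - 2 * n * inner q d + n^2 * inner d d)"
      using i4 unfolding in4 nd2 nq2 by simp
  qed
  then show ?thesis by (simp add: p_def q_def power2_norm_eq_inner)
qed

lemma inv_ext_simps[simp]:
  "inv_ext \<infinity> = 0" "inv_ext (ereal a) = 1 / a"
  by (simp_all add: inv_ext_def)

lemma ereal_cases_gt:
  assumes "ereal m < L"
  obtains "L = \<infinity>" | a where "L = ereal a" "a > m"
  using assms by (cases L) auto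

lemma C1:
  fixes m n :: real and L1 L2 :: ereal
  assumes m1: "ereal m < L1" and n2: "ereal n < L2" and smooth: "L1 < \<infinity> \<or> L2 < \<infinity>"
    and mus: "m + n > 0 \<or> (m = 0 \<and> n = 0)"
    and cond: "L1 \<ge> L2 \<and> L2 \<ge> ereal m \<and> m \<ge> 0 \<and> L1 > ereal n \<and> (n \<ge> 0 \<or> (n < 0 \<and> Epar m n L1 L2 \<le> 0))"
  shows "cert_ok m n (inv_ext (L1 - ereal m)) (inv_ext (L2 - ereal n))
           ((1 - m * inv_ext L2) * inv_ext (L1 - ereal m))
           (inv_ext L2 * (1 + m * (inv_ext L2 - inv_ext L1) / (1 - m * inv_ext L1)))"
proof -
  have m: "m \<ge> 0" using cond by simp
  obtain b where L2b: "L2 = ereal b" and bn: "b > n"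
    using n2 smooth cond by (cases L2) auto
  have bm: "b \<ge> m" using cond L2b by simp
  have b0: "b > 0" using mus bm bn by auto
  define l2 where "l2 = 1 / b"
  have bl2: "b * l2 = 1" using b0 by (simp add: l2_def)
  have l2p: "l2 > 0" using b0 by (simp add: l2_def)
  define c2 where "c2 = 1 / (b - n)"
  have c2: "c2 * (b - n) = 1" using bn by (simp add: c2_def)
  have iL2: "inv_ext L2 = l2" by (simp add: L2b l2_def)
  have iL2n: "inv_ext (L2 - ereal n) = c2" by (simp add: L2b c2_def)
  have Ec: "n < 0 \<Longrightarrow> Epar m n L1 L2 \<le> 0" using cond by auto
  have nm: "n < 0 \<Longrightarrow> m > 0" using mus by auto
  show ?thesis
  proof (cases rule: ereal_cases_gt[OF m1])
    case 1
    have iL1: "inv_ext L1 = 0" "inv_ext (L1 - ereal m) = 0" by (simp_all add: 1)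
    show ?thesis unfolding iL1 iL2 iL2n
    proof (rule case1[where b = b and E = "Epar m n L1 L2"])
      show "m \<ge> 0" "(0::real) \<ge> 0" "0 \<le> l2" "m * 0 < 1" "b * l2 = 1" "b > 0" "b > n"
        "0 * (1 - m * 0) = (0::real)" "c2 * (b - n) = 1" using m l2p bl2 b0 bn c2 by auto
      show "(1 - m * l2) * 0 = (1 - m * l2) * (0::real)" by simp
      show "l2 * (1 + m * (l2 - 0) / (1 - m * 0)) * (1 - m * 0) = l2 * (1 - m * 0 + m * (l2 - 0))" by simp
      show "- n * m * Epar m n L1 L2 = (b + n) * (0 - l2) * m - n + n * m * 0" if "n < 0"
        using that nm[OF that] b0 unfolding Epar_def iL1 iL2 L2b by (simp add: field_simps l2_def)
      show "n \<ge> 0 \<or> (n < 0 \<and> m > 0 \<and> Epar m n L1 L2 \<le> 0)" using Ec nm by auto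
    qed
  next
    case (2 a)
    have ab: "a \<ge> b" using cond 2 L2b by simp
    have am: "a > m" using 2 by simp
    have a0: "a > 0" using ab b0 by simp
    define l1 where "l1 = 1 / a"
    define c1 where "c1 = 1 / (a - m)"
    have iL1: "inv_ext L1 = l1" "inv_ext (L1 - ereal m) = c1" by (simp_all add: 2 l1_def c1_def)
    have ml1: "m * l1 < 1" using am a0 by (simp add: l1_def)
    have d1: "1 - m * l1 \<noteq> 0" using ml1 by simp
    show ?thesis unfolding iL1 iL2 iL2n
    proof (rule case1[where b = b and E = "Epar m n L1 L2"])
      show "m \<ge> 0" "l1 \<ge> 0" "m * l1 < 1" "b * l2 = 1" "b > 0" "b > n" "c2 * (b - n) = 1"
        using m a0 ml1 bl2 b0 bn c2 by (auto simp: l1_def)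
      show "l1 \<le> l2" using ab b0 by (simp add: l1_def l2_def frac_le)
      show "c1 * (1 - m * l1) = l1" using am a0 by (simp add: c1_def l1_def field_simps)
      show "(1 - m * l2) * c1 = (1 - m * l2) * c1" by simp
      show "l2 * (1 + m * (l2 - l1) / (1 - m * l1)) * (1 - m * l1) = l2 * (1 - m * l1 + m * (l2 - l1))"
        using d1 by (simp add: field_simps)
      show "- n * m * Epar m n L1 L2 = (b + n) * (l1 - l2) * m - n + n * m * l1" if "n < 0"
        using that nm[OF that] b0 unfolding Epar_def iL1 iL2 L2b by (simp add: field_simps l2_def)
      show "n \<ge> 0 \<or> (n < 0 \<and> m > 0 \<and> Epar m n L1 L2 \<le> 0)" using Ec nm by auto
    qed
  qed
qed

lemma C2:
  fixes m n :: real and L1 L2 :: ereal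
  assumes m1: "ereal m < L1" and n2: "ereal n < L2" and smooth: "L1 < \<infinity> \<or> L2 < \<infinity>"
    and cond: "L2 \<ge> L1 \<and> L1 \<ge> ereal n \<and> n \<ge> 0 \<and> L2 > ereal m \<and> m \<ge> 0"
  shows "cert_ok m n (inv_ext (L1 - ereal m)) (inv_ext (L2 - ereal n))
           (inv_ext L1 * (1 + n * (inv_ext L1 - inv_ext L2) / (1 - n * inv_ext L2)))
           ((1 - n * inv_ext L1) * inv_ext (L2 - ereal n))"
proof -
  have m: "m \<ge> 0" and n: "n \<ge> 0" using cond by auto
  obtain a where L1a: "L1 = ereal a" and am: "a > m"
    using m1 smooth cond by (cases L1) auto
  have an: "a \<ge> n" using cond L1a by simp
  have a0: "a > 0" using am m by simp
  define l1 where "l1 = 1 / a"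
  define c1 where "c1 = 1 / (a - m)"
  have al1: "a * l1 = 1" using a0 by (simp add: l1_def)
  have c1: "c1 * (a - m) = 1" using am by (simp add: c1_def)
  have iL1: "inv_ext L1 = l1" "inv_ext (L1 - ereal m) = c1" by (simp_all add: L1a l1_def c1_def)
  show ?thesis
  proof (cases rule: ereal_cases_gt[OF n2])
    case 1
    have iL2: "inv_ext L2 = 0" "inv_ext (L2 - ereal n) = 0" by (simp_all add: 1)
    show ?thesis unfolding iL1 iL2
    proof (rule case2[where a = a])
      show "m \<ge> 0" "n \<ge> 0" "a > m" "a * l1 = 1" "(0::real) \<ge> 0" "n * 0 < 1" "c1 * (a - m) = 1"
        "0 * (1 - n * 0) = (0::real)" using m n am al1 c1 by auto
      show "0 \<le> l1" using a0 by (simp add: l1_def)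
      show "l1 * (1 + n * (l1 - 0) / (1 - n * 0)) * (1 - n * 0) = l1 * (1 - n * 0 + n * (l1 - 0))" by simp
      show "(1 - n * l1) * 0 = (1 - n * l1) * (0::real)" by simp
    qed
  next
    case (2 b)
    have ba: "b \<ge> a" using cond 2 L1a by simp
    have bn: "b > n" using 2 by simp
    have b0: "b > 0" using ba a0 by simp
    define l2 where "l2 = 1 / b"
    define c2 where "c2 = 1 / (b - n)"
    have iL2: "inv_ext L2 = l2" "inv_ext (L2 - ereal n) = c2" by (simp_all add: 2 l2_def c2_def)
    have nl2: "n * l2 < 1" using bn b0 by (simp add: l2_def)
    have d2: "1 - n * l2 \<noteq> 0" using nl2 by simp
    show ?thesis unfolding iL1 iL2
    proof (rule case2[where a = a])
      show "m \<ge> 0" "n \<ge> 0" "a > m" "a * l1 = 1" "n * l2 < 1" "c1 * (a - m) = 1"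
        using m n am al1 nl2 c1 by auto
      show "l2 \<ge> 0" using b0 by (simp add: l2_def)
      show "l2 \<le> l1" using ba a0 by (simp add: l1_def l2_def frac_le)
      show "c2 * (1 - n * l2) = l2" using bn b0 by (simp add: c2_def l2_def field_simps)
      show "l1 * (1 + n * (l1 - l2) / (1 - n * l2)) * (1 - n * l2) = l1 * (1 - n * l2 + n * (l1 - l2))"
        using d2 by (simp add: field_simps)
      show "(1 - n * l1) * c2 = (1 - n * l1) * c2" by simp
    qed
  qed
qed

lemma C3:
  fixes m n :: real and L1 L2 :: ereal
  assumes m1: "ereal m < L1" and n2: "ereal n < L2"
    and cond: "n < 0 \<and> m > 0 \<and> L2 > ereal m \<and> L1 > ereal n \<and> Bpar m n L2 \<le> 0"
  shows "cert_ok m n (inv_ext (L1 - ereal m)) (inv_ext (L2 - ereal n))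
           (inv_ext L1 * Bpar m n L2 / (Bpar m n L2 - inv_ext L1)) (inv_ext (L2 + ereal n))"
proof -
  have m: "m > 0" and n: "n < 0" and B0: "Bpar m n L2 \<le> 0" using cond by auto
  define B where "B = Bpar m n L2"
  have "\<exists>l2 c2. l2 \<ge> 0 \<and> c2 * (1 - n * l2) = l2 \<and> B * m * n = n + m + l2 * m * n
      \<and> inv_ext (L2 + ereal n) * (1 + n * l2) = l2 \<and> inv_ext (L2 - ereal n) = c2"
  proof (cases rule: ereal_cases_gt[OF n2])
    case 1
    show ?thesis
      by (rule exI[of _ 0], rule exI[of _ 0]) (use m n in \<open>simp add: 1 B_def Bpar_def field_simps\<close>)
  next
    case (2 b)
    have bm: "b > m" using cond 2 by simp
    have b0: "b > 0" using bm m by simp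
    have bn0: "b + n \<noteq> 0"
    proof
      assume h: "b + n = 0"
      then have "B = 1 / m" using b0 by (simp add: B_def Bpar_def 2 field_simps)
      then show False using B0 m B_def by simp
    qed
    show ?thesis
    proof (rule exI[of _ "1/b"], rule exI[of _ "1/(b - n)"], intro conjI)
      show "1/b \<ge> 0" using b0 by simp
      show "1 / (b - n) * (1 - n * (1 / b)) = 1 / b" using b0 2 by (simp add: field_simps)
      show "B * m * n = n + m + 1 / b * m * n" using b0 m n by (simp add: B_def Bpar_def 2 field_simps)
      show "inv_ext (L2 + ereal n) * (1 + n * (1 / b)) = 1 / b" using b0 bn0 by (simp add: 2 field_simps)
      show "inv_ext (L2 - ereal n) = 1 / (b - n)" by (simp add: 2)
    qed
  qed
  then obtain l2 c2 where l2: "l2 \<ge> 0" and c2: "c2 * (1 - n * l2) = l2" and B: "B * m * n = n + m + l2 * m * n"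
    and sp: "inv_ext (L2 + ereal n) * (1 + n * l2) = l2" and iL2: "inv_ext (L2 - ereal n) = c2" by blast
  show ?thesis unfolding iL2 B_def[symmetric]
  proof (cases rule: ereal_cases_gt[OF m1])
    case 1
    have iL1: "inv_ext L1 = 0" "inv_ext (L1 - ereal m) = 0" by (simp_all add: 1)
    show "cert_ok m n (inv_ext (L1 - ereal m)) c2 (inv_ext L1 * B / (B - inv_ext L1)) (inv_ext (L2 + ereal n))"
      unfolding iL1 using case3_inf[OF m n l2 c2 B _ sp] B0 by (simp add: B_def)
  next
    case (2 a)
    have a0: "a > 0" using 2 m by simp
    have iL1: "inv_ext L1 = 1/a" "inv_ext (L1 - ereal m) = 1/(a - m)" by (simp_all add: 2)
    have Bl: "B - 1/a \<noteq> 0" using B0 a0 B_def by (smt (verit) divide_pos_pos)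
    show "cert_ok m n (inv_ext (L1 - ereal m)) c2 (inv_ext L1 * B / (B - inv_ext L1)) (inv_ext (L2 + ereal n))"
      unfolding iL1
    proof (rule case3_fin[OF m n _ _ _ l2 c2 B _ _ sp])
      show "a > m" using 2 by simp
      show "a * (1/a) = 1" using a0 by simp
      show "1 / (a - m) * (a - m) = 1" using 2 by simp
      show "B \<le> 0" using B0 B_def by simp
      show "1 / a * B / (B - 1 / a) * (B - 1 / a) = 1 / a * B" using Bl by simp
    qed
  qed
qed

lemma c_nonneg: "ereal m < L \<Longrightarrow> inv_ext (L - ereal m) \<ge> 0"
  by (cases L) auto

lemma C4:
  fixes m n :: real and L1 L2 :: ereal
  assumes m1: "ereal m < L1" and n2: "ereal n < L2" and mus: "m + n > 0 \<or> (m = 0 \<and> n = 0)"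
    and cond: "n < 0 \<and> m > 0 \<and> L1 > ereal n \<and>
       ((Bpar m n L2 > 0 \<and> L2 > ereal m) \<or> (Bpar m n L2 > 0 \<and> 0 < L2 \<and> L2 \<le> ereal m) \<or>
        ((Bpar m n L2 \<le> 0 \<or> L2 = 0) \<and> L2 \<le> 0))"
  shows "cert_ok m n (inv_ext (L1 - ereal m)) (inv_ext (L2 - ereal n)) 0 ((m + n) / n^2)"
proof -
  have m: "m > 0" and n: "n < 0" using cond by auto
  have mn: "m + n > 0" using mus m by auto
  have mnn: "m * n < 0" using m n by (simp add: mult_pos_neg)
  obtain b where L2b: "L2 = ereal b" and bn: "b > n"
  proof (cases rule: ereal_cases_gt[OF n2])
    case 1
    then have "Bpar m n L2 > 0" using cond by auto
    then have "1/m + 1/n > 0" using 1 by (simp add: Bpar_def)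
    moreover have "1/m + 1/n = (m + n) / (m * n)" using m n by (simp add: field_simps)
    moreover have "(m + n) / (m * n) < 0" using mn mnn by (simp add: divide_pos_neg)
    ultimately show ?thesis by simp
  next
    case (2 b) then show ?thesis using that by blast
  qed
  have key: "m * b + n * b + m * n \<le> 0"
  proof (cases "b = 0")
    case True then show ?thesis using mnn by simp
  next
    case False
    have Bid: "Bpar m n L2 * (m * n * b) = m * b + n * b + m * n"
      using False m n by (simp add: Bpar_def L2b field_simps)
    have "(Bpar m n L2 > 0 \<and> b > 0) \<or> (b < 0 \<and> Bpar m n L2 \<le> 0)"
      using cond False L2b by (auto simp: zero_ereal_def)
    then show ?thesis
    proof
      assume h: "Bpar m n L2 > 0 \<and> b > 0"
      then have "m * n * b < 0" using mnn by (simp add: mult_neg_pos)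
      then have "Bpar m n L2 * (m * n * b) < 0" using h by (simp add: mult_pos_neg)
      then show ?thesis using Bid by simp
    next
      assume h: "b < 0 \<and> Bpar m n L2 \<le> 0"
      then have "m * n * b > 0" using mnn by (simp add: mult_neg_neg)
      then have "Bpar m n L2 * (m * n * b) \<le> 0" using h by (simp add: mult_nonpos_nonneg)
      then show ?thesis using Bid by simp
    qed
  qed
  have iL2: "inv_ext (L2 - ereal n) = 1 / (b - n)" by (simp add: L2b)
  show ?thesis unfolding iL2
  proof (rule case4[OF m n mn c_nonneg[OF m1] _ bn _ key])
    show "1 / (b - n) * (b - n) = 1" using bn by simp
    show "(m + n) / n^2 * n^2 = m + n" using n by simp
  qed
qed

lemma C5:
  fixes m n :: real and L1 L2 :: ereal
  assumes m1: "ereal m < L1" and n2: "ereal n < L2"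
    and cond: "L1 > ereal m \<and> ereal m \<ge> L2 \<and> L2 > 0 \<and> L1 > ereal n \<and> (n \<ge> 0 \<or> (n < 0 \<and> Bpar m n L2 \<le> 0))"
  shows "cert_ok m n (inv_ext (L1 - ereal m)) (inv_ext (L2 - ereal n)) 0
     ((real_of_ereal L2 + m) / (real_of_ereal L2)^2)"
proof -
  obtain b where L2b: "L2 = ereal b" and bn: "b > n"
    using n2 cond by (cases L2) auto
  have b0: "b > 0" and bm: "b \<le> m" using cond L2b by (auto simp: zero_ereal_def)
  have m0: "m > 0" using b0 bm by simp
  have disj: "n \<ge> 0 \<or> (n < 0 \<and> Bpar m n L2 \<le> 0)" using cond by auto
  have key: "m * b + n * b + m * n \<ge> 0"
    using disj
  proof
    assume "n \<ge> 0" then show ?thesis using m0 b0 by (intro add_nonneg_nonneg) auto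
  next
    assume h: "n < 0 \<and> Bpar m n L2 \<le> 0"
    have Bid: "Bpar m n L2 * (m * n * b) = m * b + n * b + m * n"
      using b0 m0 h by (simp add: Bpar_def L2b field_simps)
    have "m * n < 0" using m0 h by (simp add: mult_pos_neg)
    then have "m * n * b < 0" using b0 by (simp add: mult_neg_pos)
    then have "Bpar m n L2 * (m * n * b) \<ge> 0" using h by (simp add: mult_nonpos_nonpos)
    then show ?thesis using Bid by simp
  qed
  have iL2: "inv_ext (L2 - ereal n) = 1 / (b - n)" "real_of_ereal L2 = b" by (simp_all add: L2b)
  show ?thesis unfolding iL2
  proof (rule case5[OF b0 bm c_nonneg[OF m1] _ bn _ key])
    show "1 / (b - n) * (b - n) = 1" using bn by simp
    show "(b + m) / b^2 * b^2 = b + m" using b0 by simp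
  qed
qed

lemma C6:
  fixes m n :: real and L1 L2 :: ereal
  assumes m1: "ereal m < L1" and n2: "ereal n < L2"
    and cond: "L2 > ereal n \<and> ereal n \<ge> L1 \<and> L1 > ereal m \<and> m \<ge> 0"
  shows "cert_ok m n (inv_ext (L1 - ereal m)) (inv_ext (L2 - ereal n))
     ((real_of_ereal L1 + n) / (real_of_ereal L1)^2) 0"
proof -
  obtain a where L1a: "L1 = ereal a" and am: "a > m"
    using m1 cond by (cases L1) auto
  have na: "n \<ge> a" and m: "m \<ge> 0" using cond L1a by auto
  have a0: "a > 0" using am m by simp
  have iL1: "inv_ext (L1 - ereal m) = 1 / (a - m)" "real_of_ereal L1 = a" by (simp_all add: L1a)
  show ?thesis unfolding iL1
  proof (rule case6[OF m am na c_nonneg[OF n2]])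
    show "a * (1/a) = 1" using a0 by simp
    show "1 / (a - m) * (a - m) = 1" using am by simp
    show "(a + n) / a^2 * a^2 = a + n" using a0 by simp
  qed
qed

theorem theorem2:
  fixes f1 f2 :: "'a::euclidean_space \<Rightarrow> real"
    and \<mu>1 \<mu>2 :: real and L1 L2 :: ereal
    and x xp g1 g2 g2p :: 'a
  assumes f1: "FmuL \<mu>1 L1 f1" and f2: "FmuL \<mu>2 L2 f2"
    and mu1_nonneg: "\<mu>1 \<ge> 0"
    and bdd: "bdd_below (range (\<lambda>w. f1 w - f2 w))"
    and dom_ne: "dom_subdiff \<mu>1 f1 \<noteq> {}"
    and dom_sub: "dom_subdiff \<mu>1 f1 \<subseteq> dom_subdiff \<mu>2 f2"
    and range_sub: "range_subdiff \<mu>2 f2 \<subseteq> range_subdiff \<mu>1 f1"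
    and smooth: "L1 < \<infinity> \<or> L2 < \<infinity>"
    and mus: "\<mu>1 + \<mu>2 > 0 \<or> (\<mu>1 = 0 \<and> \<mu>2 = 0)"
    and x_dom: "x \<in> dom_subdiff \<mu>1 f1"
    and g2: "g2 \<in> subdiff \<mu>2 f2 x"
    and xp: "\<forall>w. f1 xp - inner g2 xp \<le> f1 w - inner g2 w"
    and g1: "g1 \<in> subdiff \<mu>1 f1 x"
    and g2p: "g2p \<in> subdiff \<mu>2 f2 xp"
  shows
  "let F = (\<lambda>w. f1 w - f2 w); l1 = inv_ext L1; l2 = inv_ext L2;
       B = Bpar \<mu>1 \<mu>2 L2; E = Epar \<mu>1 \<mu>2 L1 L2;
       ineq = (\<lambda>\<sigma> \<sigma>p. F x - F xp \<ge> \<sigma> * (1/2) * (norm (g1 - g2))^2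
                                     + \<sigma>p * (1/2) * (norm (g2 - g2p))^2)
   in
   ((L1 \<ge> L2 \<and> L2 \<ge> ereal \<mu>1 \<and> \<mu>1 \<ge> 0 \<and> L1 > ereal \<mu>2 \<and>
       (\<mu>2 \<ge> 0 \<or> (\<mu>2 < 0 \<and> E \<le> 0)))
     \<longrightarrow> ineq ((1 - \<mu>1 * l2) * inv_ext (L1 - ereal \<mu>1))
               (l2 * (1 + \<mu>1 * (l2 - l1) / (1 - \<mu>1 * l1)))) \<and>
   ((L2 \<ge> L1 \<and> L1 \<ge> ereal \<mu>2 \<and> \<mu>2 \<ge> 0 \<and> L2 > ereal \<mu>1 \<and> \<mu>1 \<ge> 0)
     \<longrightarrow> ineq (l1 * (1 + \<mu>2 * (l1 - l2) / (1 - \<mu>2 * l2)))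
               ((1 - \<mu>2 * l1) * inv_ext (L2 - ereal \<mu>2))) \<and>
   ((\<mu>2 < 0 \<and> \<mu>1 > 0 \<and> L2 > ereal \<mu>1 \<and> L1 > ereal \<mu>2 \<and> B \<le> 0 \<and>
       ((L1 \<ge> L2 \<and> E \<ge> 0) \<or> L2 > L1))
     \<longrightarrow> ineq (l1 * B / (B - l1)) (inv_ext (L2 + ereal \<mu>2))) \<and>
   ((\<mu>2 < 0 \<and> \<mu>1 > 0 \<and> L1 > ereal \<mu>2 \<and>
       ((B > 0 \<and> L2 > ereal \<mu>1) \<or> (B > 0 \<and> 0 < L2 \<and> L2 \<le> ereal \<mu>1) \<or>
        ((B \<le> 0 \<or> L2 = 0) \<and> L2 \<le> 0)))
     \<longrightarrow> ineq 0 ((\<mu>1 + \<mu>2) / \<mu>2^2)) \<and>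
   ((L1 > ereal \<mu>1 \<and> ereal \<mu>1 \<ge> L2 \<and> L2 > 0 \<and> L1 > ereal \<mu>2 \<and>
       (\<mu>2 \<ge> 0 \<or> (\<mu>2 < 0 \<and> B \<le> 0)))
     \<longrightarrow> ineq 0 ((real_of_ereal L2 + \<mu>1) / (real_of_ereal L2)^2)) \<and>
   ((L2 > ereal \<mu>2 \<and> ereal \<mu>2 \<ge> L1 \<and> L1 > ereal \<mu>1 \<and> \<mu>1 \<ge> 0)
     \<longrightarrow> ineq ((real_of_ereal L1 + \<mu>2) / (real_of_ereal L1)^2) 0)"
proof -
  have m1: "ereal \<mu>1 < L1" using f1 by (simp add: FmuL_def)
  have n2: "ereal \<mu>2 < L2" using f2 by (simp add: FmuL_def)
  have g2a: "g2 \<in> subdiff \<mu>1 f1 xp" by (rule argmin_subdiff[OF f1 xp])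
  have K: "\<And>\<sigma> \<sigma>p. cert_ok \<mu>1 \<mu>2 (inv_ext (L1 - ereal \<mu>1)) (inv_ext (L2 - ereal \<mu>2)) \<sigma> \<sigma>p \<Longrightarrow>
     f1 x - f2 x - (f1 xp - f2 xp) \<ge> \<sigma> * (1/2) * (norm (g1 - g2))^2 + \<sigma>p * (1/2) * (norm (g2 - g2p))^2"
    by (rule assemble[OF f1 f2 g1 g2a g2 g2p])
  show ?thesis unfolding Let_def
  proof (intro conjI impI)
    show "f1 x - f2 x - (f1 xp - f2 xp) \<ge> (1 - \<mu>1 * inv_ext L2) * inv_ext (L1 - ereal \<mu>1) * (1/2) * (norm (g1 - g2))^2
        + inv_ext L2 * (1 + \<mu>1 * (inv_ext L2 - inv_ext L1) / (1 - \<mu>1 * inv_ext L1)) * (1/2) * (norm (g2 - g2p))^2"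
      if c: "L1 \<ge> L2 \<and> L2 \<ge> ereal \<mu>1 \<and> \<mu>1 \<ge> 0 \<and> L1 > ereal \<mu>2 \<and>
       (\<mu>2 \<ge> 0 \<or> (\<mu>2 < 0 \<and> Epar \<mu>1 \<mu>2 L1 L2 \<le> 0))"
      by (rule K[OF C1[OF m1 n2 smooth mus c]])
    show "f1 x - f2 x - (f1 xp - f2 xp) \<ge> inv_ext L1 * (1 + \<mu>2 * (inv_ext L1 - inv_ext L2) / (1 - \<mu>2 * inv_ext L2)) * (1/2) * (norm (g1 - g2))^2
        + (1 - \<mu>2 * inv_ext L1) * inv_ext (L2 - ereal \<mu>2) * (1/2) * (norm (g2 - g2p))^2"
      if c: "L2 \<ge> L1 \<and> L1 \<ge> ereal \<mu>2 \<and> \<mu>2 \<ge> 0 \<and> L2 > ereal \<mu>1 \<and> \<mu>1 \<ge> 0"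
      by (rule K[OF C2[OF m1 n2 smooth c]])
    show "f1 x - f2 x - (f1 xp - f2 xp) \<ge> inv_ext L1 * Bpar \<mu>1 \<mu>2 L2 / (Bpar \<mu>1 \<mu>2 L2 - inv_ext L1) * (1/2) * (norm (g1 - g2))^2
        + inv_ext (L2 + ereal \<mu>2) * (1/2) * (norm (g2 - g2p))^2"
      if c: "\<mu>2 < 0 \<and> \<mu>1 > 0 \<and> L2 > ereal \<mu>1 \<and> L1 > ereal \<mu>2 \<and> Bpar \<mu>1 \<mu>2 L2 \<le> 0 \<and>
       ((L1 \<ge> L2 \<and> Epar \<mu>1 \<mu>2 L1 L2 \<ge> 0) \<or> L2 > L1)"
      by (rule K[OF C3[OF m1 n2]]) (use c in auto)
    show "f1 x - f2 x - (f1 xp - f2 xp) \<ge> 0 * (1/2) * (norm (g1 - g2))^2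
        + (\<mu>1 + \<mu>2) / \<mu>2^2 * (1/2) * (norm (g2 - g2p))^2"
      if c: "\<mu>2 < 0 \<and> \<mu>1 > 0 \<and> L1 > ereal \<mu>2 \<and>
       ((Bpar \<mu>1 \<mu>2 L2 > 0 \<and> L2 > ereal \<mu>1) \<or> (Bpar \<mu>1 \<mu>2 L2 > 0 \<and> 0 < L2 \<and> L2 \<le> ereal \<mu>1) \<or>
        ((Bpar \<mu>1 \<mu>2 L2 \<le> 0 \<or> L2 = 0) \<and> L2 \<le> 0))"
      by (rule K[OF C4[OF m1 n2 mus c]])
    show "f1 x - f2 x - (f1 xp - f2 xp) \<ge> 0 * (1/2) * (norm (g1 - g2))^2
        + (real_of_ereal L2 + \<mu>1) / (real_of_ereal L2)^2 * (1/2) * (norm (g2 - g2p))^2"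
      if c: "L1 > ereal \<mu>1 \<and> ereal \<mu>1 \<ge> L2 \<and> L2 > 0 \<and> L1 > ereal \<mu>2 \<and>
       (\<mu>2 \<ge> 0 \<or> (\<mu>2 < 0 \<and> Bpar \<mu>1 \<mu>2 L2 \<le> 0))"
      by (rule K[OF C5[OF m1 n2 c]])
    show "f1 x - f2 x - (f1 xp - f2 xp) \<ge> (real_of_ereal L1 + \<mu>2) / (real_of_ereal L1)^2 * (1/2) * (norm (g1 - g2))^2
        + 0 * (1/2) * (norm (g2 - g2p))^2"
      if c: "L2 > ereal \<mu>2 \<and> ereal \<mu>2 \<ge> L1 \<and> L1 > ereal \<mu>1 \<and> \<mu>1 \<ge> 0"
      by (rule K[OF C6[OF m1 n2 c]])
  qed
qed

end
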